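(* Let $A=kQ/I_S$ be a homotopy path algebra with path category $\mathcal C_A$ and path poset $\operatorname{Path}_A$. Then the functor $\Phi:\operatorname{Path}_A\to\mathcal C_A$, $p\mapsto h(p)$, $(p<q)\mapsto q/p$, is an almost discrete fibration.
   Context: $Q$ is a finite quiver (loops and cycles allowed); paths are concatenated left to right ($pq$ is $p$ followed by $q$), $t(p)$ and $h(p)$ are tail and head. A homotopy path algebra is $A=kQ/I_S$ where $S$ is a set of pairs $(p,q)$ of paths with equal tails and heads, $I_S$ is the ideal generated by the $p-q$, and $I_S$ is left and right cancellative: writing $p\sim q$ iff $p-q\in I_S$, $rp\sim rq$ implies $p\sim q$ and $pr\sim qr$ implies $p\sim q$. The path category $\mathcal C_A$ has objects the vertices of $Q$ and morphisms the $\sim$-classes of paths. $\operatorname{Path}_A$ is the set of all paths (including trivial ones) modulo $\sim$, ordered by $p\le q$ iff $q\sim pr$ for some path $r$, viewed as a category; $q/p$ denotes the (by cancellativity unique) class of $r$ with $q\sim pr$. A factorization $g=g_0\circ\cdots\circ g_{n+1}$ ($n\ge0$) is nontrivial if no $g_i$ is an isomorphism. A functor $F:\mathcal C\to\mathcal D$ is an almost discrete fibration if for every morphism $q$ of $\mathcal D$, every $p$ with $F(p)=q$ and every nontrivial factorization $q=g_0\circ\cdots\circ g_{n+1}$, there is a nontrivial factorization $p=f_0\circ\cdots\circ f_{n+1}$ with $F(f_i)=g_i$, unique up to $(f_i)\sim(f'_i)$ iff there are isomorphisms $h_0,\dots,h_n$ with $f'_0=f_0\circ h_0$, $f'_i=h_{i-1}^{-1}\circ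 f_i\circ h_i$ ($1\le i\le n$), $f'_{n+1}=h_n^{-1}\circ f_{n+1}$. *)

theory Defs
  imports Main
begin

record ('v,'e) quiver =
  verts :: "'v set"
  arrs  :: "'e set"
  src   :: "'e \<Rightarrow> 'v"
  tgt   :: "'e \<Rightarrow> 'v"

text \<open>A path is a start vertex together with the list of its arrows
  (concatenated left to right); the trivial path at v is (v, []).\<close>
type_synonym ('v,'e) path = "'v \<times> 'e list"

fun arrow_chain :: "('e \<Rightarrow> 'v) \<Rightarrow> ('e \<Rightarrow> 'v) \<Rightarrow> 'v \<Rightarrow> 'e list \<Rightarrow> bool" where
  "arrow_chain s t v [] = True"
| "arrow_chain s t v (a # as) = (s a = v \<and> arrow_chain s t (t a) as)"

fun end_vertex :: "('e \<Rightarrow> 'v) \<Rightarrow> 'v \<Rightarrow> 'e list \<Rightarrow> 'v" where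
  "end_vertex t v [] = v"
| "end_vertex t v (a # as) = end_vertex t (t a) as"

definition valid_path :: "('v,'e) quiver \<Rightarrow> ('v,'e) path \<Rightarrow> bool" where
  "valid_path Q p \<longleftrightarrow> fst p \<in> verts Q \<and> set (snd p) \<subseteq> arrs Q
      \<and> arrow_chain (src Q) (tgt Q) (fst p) (snd p)"

definition ptail :: "('v,'e) path \<Rightarrow> 'v" where
  "ptail p = fst p"

definition phead :: "('v,'e) quiver \<Rightarrow> ('v,'e) path \<Rightarrow> 'v" where
  "phead Q p = end_vertex (tgt Q) (fst p) (snd p)"

definition pconc :: "('v,'e) path \<Rightarrow> ('v,'e) path \<Rightarrow> ('v,'e) path" where
  "pconc p q = (fst p, snd p @ snd q)"

definition finite_quiver :: "('v,'e) quiver \<Rightarrow> bool" where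
  "finite_quiver Q \<longleftrightarrow> finite (verts Q) \<and> finite (arrs Q)
     \<and> src Q ` arrs Q \<subseteq> verts Q \<and> tgt Q ` arrs Q \<subseteq> verts Q"

text \<open>Elements of kQ are (finitely supported) functions from paths to k;
  the basis element of a path p is delta p.\<close>
definition delta :: "('v,'e) path \<Rightarrow> (('v,'e) path \<Rightarrow> 'k::field)" where
  "delta p = (\<lambda>x. if x = p then 1 else 0)"

text \<open>The two-sided ideal of kQ generated by the elements p - q, (p,q) in S:
  the k-linear span of all u(p - q)w with u, w paths (products of paths that
  are not composable vanish in kQ).\<close>
inductive_set hideal :: "('v,'e) quiver \<Rightarrow> (('v,'e) path \<times> ('v,'e) path) set
     \<Rightarrow> (('v,'e) path \<Rightarrow> 'k::field) set"
  for Q S where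
  zero: "(\<lambda>_. 0) \<in> hideal Q S"
| add: "x \<in> hideal Q S \<Longrightarrow> y \<in> hideal Q S \<Longrightarrow> (\<lambda>z. x z + y z) \<in> hideal Q S"
| smult: "x \<in> hideal Q S \<Longrightarrow> (\<lambda>z. c * x z) \<in> hideal Q S"
| gen: "(p, q) \<in> S \<Longrightarrow> valid_path Q u \<Longrightarrow> valid_path Q w \<Longrightarrow>
        phead Q u = ptail p \<Longrightarrow> phead Q p = ptail w \<Longrightarrow>
        (\<lambda>z. delta (pconc (pconc u p) w) z - delta (pconc (pconc u q) w) z) \<in> hideal Q S"

definition hsim :: "'k::field itself \<Rightarrow> ('v,'e) quiver \<Rightarrow> (('v,'e) path \<times> ('v,'e) path) set
     \<Rightarrow> ('v,'e) path \<Rightarrow> ('v,'e) path \<Rightarrow> bool" where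
  "hsim K Q S p q \<longleftrightarrow> valid_path Q p \<and> valid_path Q q
      \<and> ((\<lambda>z. delta p z - delta q z) :: ('v,'e) path \<Rightarrow> 'k) \<in> hideal Q S"

definition homotopy_path_algebra :: "'k::field itself \<Rightarrow> ('v,'e) quiver
     \<Rightarrow> (('v,'e) path \<times> ('v,'e) path) set \<Rightarrow> bool" where
  "homotopy_path_algebra K Q S \<longleftrightarrow>
     finite_quiver Q
   \<and> (\<forall>(p, q) \<in> S. valid_path Q p \<and> valid_path Q q
         \<and> ptail p = ptail q \<and> phead Q p = phead Q q)
   \<and> (\<forall>r p q. valid_path Q r \<and> valid_path Q p \<and> valid_path Q q
         \<and> phead Q r = ptail p \<and> phead Q r = ptail q
         \<and> hsim K Q S (pconc r p) (pconc r q) \<longrightarrow> hsim K Q S p q)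
   \<and> (\<forall>r p q. valid_path Q r \<and> valid_path Q p \<and> valid_path Q q
         \<and> phead Q p = ptail r \<and> phead Q q = ptail r
         \<and> hsim K Q S (pconc p r) (pconc q r) \<longrightarrow> hsim K Q S p q)"

text \<open>cComp g f is g \<circ> f (f first).\<close>
record ('o,'m) cat =
  cOb   :: "'o set"
  cMor  :: "'m set"
  cDom  :: "'m \<Rightarrow> 'o"
  cCod  :: "'m \<Rightarrow> 'o"
  cComp :: "'m \<Rightarrow> 'm \<Rightarrow> 'm"
  cId   :: "'o \<Rightarrow> 'm"

definition is_functor :: "('o,'m) cat \<Rightarrow> ('p,'n) cat \<Rightarrow> ('o \<Rightarrow> 'p) \<Rightarrow> ('m \<Rightarrow> 'n) \<Rightarrow> bool" where
  "is_functor C D FO FM \<longleftrightarrow>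
     (\<forall>x \<in> cOb C. FO x \<in> cOb D)
   \<and> (\<forall>f \<in> cMor C. FM f \<in> cMor D \<and> cDom D (FM f) = FO (cDom C f)
                     \<and> cCod D (FM f) = FO (cCod C f))
   \<and> (\<forall>x \<in> cOb C. FM (cId C x) = cId D (FO x))
   \<and> (\<forall>f \<in> cMor C. \<forall>g \<in> cMor C. cDom C g = cCod C f \<longrightarrow>
         FM (cComp C g f) = cComp D (FM g) (FM f))"

definition is_iso :: "('o,'m) cat \<Rightarrow> 'm \<Rightarrow> bool" where
  "is_iso C f \<longleftrightarrow> f \<in> cMor C \<and> (\<exists>g \<in> cMor C. cDom C g = cCod C f \<and> cCod C g = cDom C f
       \<and> cComp C g f = cId C (cDom C f) \<and> cComp C f g = cId C (cCod C f))"

fun comp_list :: "('o,'m) cat \<Rightarrow> 'm list \<Rightarrow> 'm" where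
  "comp_list C [f] = f"
| "comp_list C (f # g # fs) = cComp C f (comp_list C (g # fs))"

definition factorization :: "('o,'m) cat \<Rightarrow> 'm \<Rightarrow> 'm list \<Rightarrow> bool" where
  "factorization C g fs \<longleftrightarrow> length fs \<ge> 2 \<and> set fs \<subseteq> cMor C
     \<and> (\<forall>i. Suc i < length fs \<longrightarrow> cDom C (fs ! i) = cCod C (fs ! Suc i))
     \<and> comp_list C fs = g"

definition nontrivial_factorization :: "('o,'m) cat \<Rightarrow> 'm \<Rightarrow> 'm list \<Rightarrow> bool" where
  "nontrivial_factorization C g fs \<longleftrightarrow> factorization C g fs \<and> (\<forall>f \<in> set fs. \<not> is_iso C f)"

text \<open>(f_i) ~ (f'_i): isomorphisms h_0..h_n (with inverses h'_i) such that
  f'_0 = f_0 \<circ> h_0, f'_i = h_(i-1)^-1 \<circ> f_i \<circ> h_i, f'_(n+1) = h_n^-1 \<circ> f_(n+1).\<close>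
definition factorization_equiv :: "('o,'m) cat \<Rightarrow> 'm list \<Rightarrow> 'm list \<Rightarrow> bool" where
  "factorization_equiv C fs fs' \<longleftrightarrow> length fs' = length fs \<and>
     (\<exists>hs hs'. length hs = length fs - 1 \<and> length hs' = length hs
       \<and> (\<forall>i < length hs. hs ! i \<in> cMor C \<and> hs' ! i \<in> cMor C
            \<and> cDom C (hs' ! i) = cCod C (hs ! i) \<and> cCod C (hs' ! i) = cDom C (hs ! i)
            \<and> cComp C (hs' ! i) (hs ! i) = cId C (cDom C (hs ! i))
            \<and> cComp C (hs ! i) (hs' ! i) = cId C (cCod C (hs ! i))
            \<and> cCod C (hs ! i) = cDom C (fs ! i))
       \<and> fs' ! 0 = cComp C (fs ! 0) (hs ! 0)
       \<and> (\<forall>i. 0 < i \<and> i < length fs - 1 \<longrightarrow>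
              fs' ! i = cComp C (hs' ! (i - 1)) (cComp C (fs ! i) (hs ! i)))
       \<and> fs' ! (length fs - 1) = cComp C (hs' ! (length fs - 2)) (fs ! (length fs - 1)))"

definition almost_discrete_fibration ::
  "('o,'m) cat \<Rightarrow> ('p,'n) cat \<Rightarrow> ('o \<Rightarrow> 'p) \<Rightarrow> ('m \<Rightarrow> 'n) \<Rightarrow> bool" where
  "almost_discrete_fibration C D FO FM \<longleftrightarrow> is_functor C D FO FM \<and>
     (\<forall>q \<in> cMor D. \<forall>p \<in> cMor C. FM p = q \<longrightarrow>
        (\<forall>gs. nontrivial_factorization D q gs \<longrightarrow>
           (\<exists>fs. nontrivial_factorization C p fs \<and> map FM fs = gs)
         \<and> (\<forall>fs fs'. nontrivial_factorization C p fs \<and> map FM fs = gs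
                   \<and> nontrivial_factorization C p fs' \<and> map FM fs' = gs
                   \<longrightarrow> factorization_equiv C fs fs')))"

definition hclass :: "'k::field itself \<Rightarrow> ('v,'e) quiver \<Rightarrow> (('v,'e) path \<times> ('v,'e) path) set
     \<Rightarrow> ('v,'e) path \<Rightarrow> ('v,'e) path set" where
  "hclass K Q S p = {q. hsim K Q S q p}"

definition path_category :: "'k::field itself \<Rightarrow> ('v,'e) quiver \<Rightarrow> (('v,'e) path \<times> ('v,'e) path) set
     \<Rightarrow> ('v, ('v,'e) path set) cat" where
  "path_category K Q S =
     \<lparr> cOb = verts Q,
       cMor = {hclass K Q S p | p. valid_path Q p},
       cDom = (\<lambda>M. ptail (SOME p. p \<in> M)),
       cCod = (\<lambda>M. phead Q (SOME p. p \<in> M)),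
       cComp = (\<lambda>M N. {r. \<exists>n \<in> N. \<exists>m \<in> M. phead Q n = ptail m \<and> hsim K Q S r (pconc n m)}),
       cId = (\<lambda>v. hclass K Q S (v, [])) \<rparr>"

definition path_leq :: "'k::field itself \<Rightarrow> ('v,'e) quiver \<Rightarrow> (('v,'e) path \<times> ('v,'e) path) set
     \<Rightarrow> ('v,'e) path set \<Rightarrow> ('v,'e) path set \<Rightarrow> bool" where
  "path_leq K Q S P R \<longleftrightarrow> (\<exists>p \<in> P. \<exists>q \<in> R. \<exists>r. valid_path Q r \<and> phead Q p = ptail r
       \<and> hsim K Q S q (pconc p r))"

text \<open>Path_A viewed as a (thin) category: one morphism (P,R) for each P \<le> R.\<close>
definition path_poset :: "'k::field itself \<Rightarrow> ('v,'e) quiver \<Rightarrow> (('v,'e) path \<times> ('v,'e) path) set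
     \<Rightarrow> (('v,'e) path set, ('v,'e) path set \<times> ('v,'e) path set) cat" where
  "path_poset K Q S =
     \<lparr> cOb = {hclass K Q S p | p. valid_path Q p},
       cMor = {(P, R). P \<in> {hclass K Q S p | p. valid_path Q p}
                    \<and> R \<in> {hclass K Q S p | p. valid_path Q p} \<and> path_leq K Q S P R},
       cDom = fst,
       cCod = snd,
       cComp = (\<lambda>g f. (fst f, snd g)),
       cId = (\<lambda>P. (P, P)) \<rparr>"

definition Phi_ob :: "('v,'e) quiver \<Rightarrow> ('v,'e) path set \<Rightarrow> 'v" where
  "Phi_ob Q P = phead Q (SOME p. p \<in> P)"

definition Phi_mor :: "'k::field itself \<Rightarrow> ('v,'e) quiver \<Rightarrow> (('v,'e) path \<times> ('v,'e) path) set
     \<Rightarrow> ('v,'e) path set \<times> ('v,'e) path set \<Rightarrow> ('v,'e) path set" where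
  "Phi_mor K Q S PR = {r. valid_path Q r \<and>
      (\<exists>p \<in> fst PR. \<exists>q \<in> snd PR. phead Q p = ptail r \<and> hsim K Q S q (pconc p r))}"

end

theory Submission
  imports Defs
begin

lemma end_vertex_append[simp]: "end_vertex t v (xs @ ys) = end_vertex t (end_vertex t v xs) ys"
  by (induction xs arbitrary: v) auto

lemma arrow_chain_append[simp]:
  "arrow_chain s t v (xs @ ys) \<longleftrightarrow> arrow_chain s t v xs \<and> arrow_chain s t (end_vertex t v xs) ys"
  by (induction xs arbitrary: v) auto

lemma valid_pconc:
  "valid_path Q a \<Longrightarrow> valid_path Q b \<Longrightarrow> phead Q a = ptail b \<Longrightarrow> valid_path Q (pconc a b)"
  by (auto simp: valid_path_def pconc_def phead_def ptail_def)

lemma phead_pconc: "phead Q a = ptail b \<Longrightarrow> phead Q (pconc a b) = phead Q b"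
  by (auto simp: pconc_def phead_def ptail_def)

lemma ptail_pconc[simp]: "ptail (pconc a b) = ptail a"
  by (simp add: pconc_def ptail_def)

lemma pconc_assoc: "pconc (pconc a b) c = pconc a (pconc b c)"
  by (simp add: pconc_def)

lemma pconc_triv[simp]: "pconc p (v, []) = p"
  by (simp add: pconc_def)

lemma valid_triv: "v \<in> verts Q \<Longrightarrow> valid_path Q (v, [])"
  by (simp add: valid_path_def)

lemma end_in_verts:
  "tgt Q ` arrs Q \<subseteq> verts Q \<Longrightarrow> v \<in> verts Q \<Longrightarrow> set as \<subseteq> arrs Q \<Longrightarrow> end_vertex (tgt Q) v as \<in> verts Q"
  by (induction as arbitrary: v) auto

lemma phead_in_verts: "finite_quiver Q \<Longrightarrow> valid_path Q p \<Longrightarrow> phead Q p \<in> verts Q"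
  unfolding finite_quiver_def valid_path_def phead_def
  by (metis end_in_verts)

definition lmul :: "('v,'e) quiver \<Rightarrow> ('v,'e) path \<Rightarrow> (('v,'e) path \<Rightarrow> 'k) \<Rightarrow> (('v,'e) path \<Rightarrow> 'k::field)" where
 "lmul Q r x = (\<lambda>z. if fst z = fst r \<and> take (length (snd r)) (snd z) = snd r
     then x (phead Q r, drop (length (snd r)) (snd z)) else 0)"

definition rmul :: "('v,'e) quiver \<Rightarrow> ('v,'e) path \<Rightarrow> (('v,'e) path \<Rightarrow> 'k) \<Rightarrow> (('v,'e) path \<Rightarrow> 'k::field)" where
 "rmul Q r x = (\<lambda>z. if length (snd r) \<le> length (snd z) \<and> drop (length (snd z) - length (snd r)) (snd z) = snd r
      \<and> phead Q (fst z, take (length (snd z) - length (snd r)) (snd z)) = fst r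
     then x (fst z, take (length (snd z) - length (snd r)) (snd z)) else 0)"

lemma lmul_delta: "lmul Q r (delta a) = (if fst a = phead Q r then delta (pconc r a) else (\<lambda>_. 0))"
proof (rule ext)
  fix z :: "('a,'b) path"
  obtain v zs where z: "z = (v, zs)" by force
  obtain w as where a: "a = (w, as)" by force
  show "lmul Q r (delta a) z = (if fst a = phead Q r then delta (pconc r a) else (\<lambda>_. 0)) z"
    unfolding lmul_def delta_def pconc_def z a
    apply (cases "take (length (snd r)) zs = snd r")
     apply (auto)
    apply (metis append_take_drop_id)
    done
qed

lemma rmul_delta: "rmul Q r (delta a) = (if phead Q a = fst r then delta (pconc a r) else (\<lambda>_. 0))"
proof (rule ext)
  fix z :: "('a,'b) path"
  obtain v zs where z: "z = (v, zs)" by force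
  obtain w as where a: "a = (w, as)" by force
  show "rmul Q r (delta a) z = (if phead Q a = fst r then delta (pconc a r) else (\<lambda>_. 0)) z"
    unfolding rmul_def delta_def pconc_def z a
    apply (cases "length (snd r) \<le> length zs \<and> drop (length zs - length (snd r)) zs = snd r")
     apply (auto)
    apply (metis append_take_drop_id)
    done
qed

lemma lmul_add: "lmul Q r (\<lambda>z. x z + y z) = (\<lambda>z. lmul Q r x z + lmul Q r y z)"
  by (auto simp: lmul_def)
lemma lmul_diff: "lmul Q r (\<lambda>z. x z - y z) = (\<lambda>z. lmul Q r x z - lmul Q r y z)"
  by (auto simp: lmul_def)
lemma lmul_smult: "lmul Q r (\<lambda>z. c * x z) = (\<lambda>z. c * lmul Q r x z)"
  by (auto simp: lmul_def)
lemma lmul_zero: "lmul Q r (\<lambda>z. 0) = (\<lambda>z. 0)"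
  by (auto simp: lmul_def)
lemma rmul_add: "rmul Q r (\<lambda>z. x z + y z) = (\<lambda>z. rmul Q r x z + rmul Q r y z)"
  by (auto simp: rmul_def)
lemma rmul_diff: "rmul Q r (\<lambda>z. x z - y z) = (\<lambda>z. rmul Q r x z - rmul Q r y z)"
  by (auto simp: rmul_def)
lemma rmul_smult: "rmul Q r (\<lambda>z. c * x z) = (\<lambda>z. c * rmul Q r x z)"
  by (auto simp: rmul_def)
lemma rmul_zero: "rmul Q r (\<lambda>z. 0) = (\<lambda>z. 0)"
  by (auto simp: rmul_def)

lemma zero_diff_hideal: "(\<lambda>z. (\<lambda>_. 0) z - (\<lambda>_. 0) z) \<in> hideal Q S"
  by (simp add: hideal.zero)

lemma lmul_hideal:
  assumes "x \<in> hideal Q S" "valid_path Q r"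
  shows "lmul Q r x \<in> hideal Q S"
  using assms(1)
proof induction
  case zero
  then show ?case by (simp add: lmul_zero hideal.zero)
next
  case (add x y)
  then show ?case by (simp add: lmul_add hideal.add)
next
  case (smult x c)
  then show ?case by (simp add: lmul_smult hideal.smult)
next
  case (gen p q u w)
  show ?case
  proof (cases "fst u = phead Q r")
    case True
    have v: "valid_path Q (pconc r u)" using True gen assms(2) by (simp add: valid_pconc ptail_def)
    have h: "phead Q (pconc r u) = ptail p" using True gen by (simp add: phead_pconc ptail_def)
    show ?thesis using True hideal.gen[OF gen(1) v gen(3) h gen(5)]
      by (simp add: lmul_diff lmul_delta pconc_assoc pconc_def)
  next
    case False
    then show ?thesis by (simp add: lmul_diff lmul_delta pconc_def hideal.zero)
  qed
qed

lemma rmul_hideal: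
  assumes "x \<in> hideal Q S" "valid_path Q r"
    and S: "\<forall>(p, q) \<in> S. phead Q p = phead Q q \<and> ptail p = ptail q"
  shows "rmul Q r x \<in> hideal Q S"
  using assms(1)
proof induction
  case zero
  then show ?case by (simp add: rmul_zero hideal.zero)
next
  case (add x y)
  then show ?case by (simp add: rmul_add hideal.add)
next
  case (smult x c)
  then show ?case by (simp add: rmul_smult hideal.smult)
next
  case (gen p q u w)
  have pq: "phead Q p = phead Q q" "ptail p = ptail q" using S gen(1) by auto
  have hp: "phead Q (pconc (pconc u p) w) = phead Q w"
    using gen by (simp add: phead_pconc)
  have hq: "phead Q (pconc (pconc u q) w) = phead Q w"
    using gen pq by (simp add: phead_pconc)
  show ?case
  proof (cases "phead Q w = fst r")
    case True
    have v: "valid_path Q (pconc w r)" using True gen assms(2) by (simp add: valid_pconc ptail_def)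
    have h: "phead Q p = ptail (pconc w r)" using gen by simp
    show ?thesis using True hideal.gen[OF gen(1) gen(2) v gen(4) h] hp hq
      by (simp add: rmul_diff rmul_delta pconc_assoc)
  next
    case False
    then show ?thesis using hp hq by (simp add: rmul_diff rmul_delta hideal.zero)
  qed
qed


lemma hideal_sum:
  fixes x :: "('v,'e) path \<Rightarrow> 'k::field"
  assumes "x \<in> hideal Q S"
    and C: "\<And>p q u w. (p, q) \<in> S \<Longrightarrow> valid_path Q u \<Longrightarrow> valid_path Q w \<Longrightarrow>
        phead Q u = ptail p \<Longrightarrow> phead Q p = ptail w \<Longrightarrow>
        (pconc (pconc u p) w \<in> C \<longleftrightarrow> pconc (pconc u q) w \<in> C)"
  shows "finite {z. x z \<noteq> 0} \<and> sum x (C \<inter> {z. x z \<noteq> 0}) = 0"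
  using assms(1)
proof induction
  case zero
  then show ?case by simp
next
  case (add x y)
  let ?U = "{z. x z \<noteq> 0} \<union> {z. y z \<noteq> 0}"
  have fU: "finite ?U" using add by simp
  have sub: "{z. x z + y z \<noteq> 0} \<subseteq> ?U" by auto
  have fin: "finite {z. x z + y z \<noteq> 0}" using finite_subset[OF sub fU] .
  have "sum (\<lambda>z. x z + y z) (C \<inter> {z. x z + y z \<noteq> 0}) = sum (\<lambda>z. x z + y z) (C \<inter> ?U)"
    by (rule sum.mono_neutral_left) (use fU in auto)
  also have "\<dots> = sum x (C \<inter> ?U) + sum y (C \<inter> ?U)" by (simp add: sum.distrib)
  also have "sum x (C \<inter> ?U) = sum x (C \<inter> {z. x z \<noteq> 0})"
    by (rule sum.mono_neutral_right) (use fU in auto)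
  also have "sum y (C \<inter> ?U) = sum y (C \<inter> {z. y z \<noteq> 0})"
    by (rule sum.mono_neutral_right) (use fU in auto)
  finally show ?case using add fin by simp
next
  case (smult x c)
  have sub: "{z. c * x z \<noteq> 0} \<subseteq> {z. x z \<noteq> 0}" by auto
  have fin: "finite {z. c * x z \<noteq> 0}" using finite_subset[OF sub] smult by simp
  have "sum (\<lambda>z. c * x z) (C \<inter> {z. c * x z \<noteq> 0}) = sum (\<lambda>z. c * x z) (C \<inter> {z. x z \<noteq> 0})"
    by (rule sum.mono_neutral_left) (use smult in auto)
  also have "\<dots> = c * sum x (C \<inter> {z. x z \<noteq> 0})" by (simp add: sum_distrib_left)
  finally show ?case using smult fin by simp
next
  case (gen p q u w)
  let ?A = "pconc (pconc u p) w" and ?B = "pconc (pconc u q) w"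
  have iff: "?A \<in> C \<longleftrightarrow> ?B \<in> C" using C gen by blast
  show ?case
  proof (cases "?A = ?B")
    case True
    then show ?thesis by simp
  next
    case False
    have supp: "{z. delta ?A z - delta ?B z \<noteq> (0::'k)} = {?A, ?B}"
      using False by (auto simp: delta_def)
    show ?thesis unfolding supp using False iff
      by (cases "?A \<in> C") (auto simp: delta_def)
  qed
qed

locale hpa =
  fixes K :: "'k::field itself" and Q :: "('v,'e) quiver" and S :: "(('v,'e) path \<times> ('v,'e) path) set"
  assumes hpa: "homotopy_path_algebra K Q S"
begin

abbreviation sim where "sim \<equiv> hsim K Q S"
abbreviation vp where "vp \<equiv> valid_path Q"
abbreviation hd' where "hd' \<equiv> phead Q"

lemma finQ: "finite_quiver Q" using hpa by (simp add: homotopy_path_algebra_def)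

lemma Sprop: "(p, q) \<in> S \<Longrightarrow> vp p \<and> vp q \<and> ptail p = ptail q \<and> hd' p = hd' q"
  using hpa unfolding homotopy_path_algebra_def by blast

lemma lcancel: "vp r \<Longrightarrow> vp p \<Longrightarrow> vp q \<Longrightarrow> hd' r = ptail p \<Longrightarrow> hd' r = ptail q
   \<Longrightarrow> sim (pconc r p) (pconc r q) \<Longrightarrow> sim p q"
  using hpa unfolding homotopy_path_algebra_def by blast

lemma sim_valid: "sim p q \<Longrightarrow> vp p \<and> vp q"
  by (simp add: hsim_def)

lemma sim_refl: "vp p \<Longrightarrow> sim p p"
  by (simp add: hsim_def hideal.zero)

lemma sim_sym: "sim p q \<Longrightarrow> sim q p"
proof -
  assume a: "sim p q"
  then have "((\<lambda>z. delta p z - delta q z) :: ('v,'e) path \<Rightarrow> 'k) \<in> hideal Q S" by (simp add: hsim_def)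
  from hideal.smult[OF this, of "-1"]
  have "((\<lambda>z. delta q z - delta p z) :: ('v,'e) path \<Rightarrow> 'k) \<in> hideal Q S" by simp
  then show ?thesis using a by (simp add: hsim_def)
qed

lemma sim_trans: "sim p q \<Longrightarrow> sim q r \<Longrightarrow> sim p r"
proof -
  assume a: "sim p q" "sim q r"
  then have "((\<lambda>z. delta p z - delta q z) :: ('v,'e) path \<Rightarrow> 'k) \<in> hideal Q S"
     "((\<lambda>z. delta q z - delta r z) :: ('v,'e) path \<Rightarrow> 'k) \<in> hideal Q S" by (simp_all add: hsim_def)
  from hideal.add[OF this]
  have "((\<lambda>z. delta p z - delta r z) :: ('v,'e) path \<Rightarrow> 'k) \<in> hideal Q S" by simp
  then show ?thesis using a by (simp add: hsim_def)
qed

lemma sim_ends: assumes "sim p q" shows "ptail p = ptail q \<and> hd' p = hd' q"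
proof (rule ccontr)
  assume ne: "\<not> ?thesis"
  then have pq: "p \<noteq> q" by auto
  let ?C = "{z. ptail z = ptail p \<and> hd' z = hd' p}"
  have x: "((\<lambda>z. delta p z - delta q z) :: ('v,'e) path \<Rightarrow> 'k) \<in> hideal Q S"
    using assms by (simp add: hsim_def)
  have "finite {z. ((\<lambda>z. delta p z - delta q z) :: ('v,'e) path \<Rightarrow> 'k) z \<noteq> 0} \<and>
     sum ((\<lambda>z. delta p z - delta q z) :: ('v,'e) path \<Rightarrow> 'k) (?C \<inter> {z. ((\<lambda>z. delta p z - delta q z) :: ('v,'e) path \<Rightarrow> 'k) z \<noteq> 0}) = 0"
  proof (rule hideal_sum[OF x])
    fix p' q' u w
    assume h: "(p', q') \<in> S" "vp u" "vp w" "hd' u = ptail p'" "hd' p' = ptail w"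
    have s: "vp p' \<and> vp q' \<and> ptail p' = ptail q' \<and> hd' p' = hd' q'" using Sprop[OF h(1)] .
    have "hd' (pconc (pconc u p') w) = hd' w" using h by (simp add: phead_pconc)
    moreover have "hd' (pconc (pconc u q') w) = hd' w" using h s by (simp add: phead_pconc)
    ultimately show "pconc (pconc u p') w \<in> ?C \<longleftrightarrow> pconc (pconc u q') w \<in> ?C" by simp
  qed
  moreover have "{z. ((\<lambda>z. delta p z - delta q z) :: ('v,'e) path \<Rightarrow> 'k) z \<noteq> 0} = {p, q}"
    using pq by (auto simp: delta_def)
  ultimately have "sum ((\<lambda>z. delta p z - delta q z) :: ('v,'e) path \<Rightarrow> 'k) (?C \<inter> {p,q}) = 0" by simp
  moreover have "?C \<inter> {p,q} = {p}" using ne by auto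
  ultimately show False using pq by (simp add: delta_def)
qed

lemma sim_lmul: "sim p q \<Longrightarrow> vp r \<Longrightarrow> hd' r = ptail p \<Longrightarrow> sim (pconc r p) (pconc r q)"
proof -
  assume a: "sim p q" "vp r" "hd' r = ptail p"
  have e: "ptail p = ptail q" using sim_ends[OF a(1)] by simp
  have x: "((\<lambda>z. delta p z - delta q z) :: ('v,'e) path \<Rightarrow> 'k) \<in> hideal Q S"
    using a by (simp add: hsim_def)
  have "lmul Q r ((\<lambda>z. delta p z - delta q z) :: ('v,'e) path \<Rightarrow> 'k) \<in> hideal Q S"
    by (rule lmul_hideal[OF x a(2)])
  then have "((\<lambda>z. delta (pconc r p) z - delta (pconc r q) z) :: ('v,'e) path \<Rightarrow> 'k) \<in> hideal Q S"
    using a e by (simp add: lmul_diff lmul_delta ptail_def)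
  then show ?thesis using a e sim_valid[OF a(1)] by (simp add: hsim_def valid_pconc)
qed

lemma sim_rmul: "sim p q \<Longrightarrow> vp r \<Longrightarrow> hd' p = ptail r \<Longrightarrow> sim (pconc p r) (pconc q r)"
proof -
  assume a: "sim p q" "vp r" "hd' p = ptail r"
  have e: "hd' p = hd' q" using sim_ends[OF a(1)] by simp
  have x: "((\<lambda>z. delta p z - delta q z) :: ('v,'e) path \<Rightarrow> 'k) \<in> hideal Q S"
    using a by (simp add: hsim_def)
  have S: "\<forall>(p, q) \<in> S. phead Q p = phead Q q \<and> ptail p = ptail q" using Sprop by blast
  have "rmul Q r ((\<lambda>z. delta p z - delta q z) :: ('v,'e) path \<Rightarrow> 'k) \<in> hideal Q S"
    by (rule rmul_hideal[OF x a(2) S])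
  then have "((\<lambda>z. delta (pconc p r) z - delta (pconc q r) z) :: ('v,'e) path \<Rightarrow> 'k) \<in> hideal Q S"
    using a e by (simp add: rmul_diff rmul_delta ptail_def)
  then show ?thesis using a e sim_valid[OF a(1)] by (simp add: hsim_def valid_pconc)
qed

abbreviation hcl where "hcl \<equiv> hclass K Q S"
abbreviation CC where "CC \<equiv> path_poset K Q S"
abbreviation DD where "DD \<equiv> path_category K Q S"
abbreviation FO where "FO \<equiv> Phi_ob Q"
abbreviation FM where "FM \<equiv> Phi_mor K Q S"

lemma mem_hcl: "x \<in> hcl p \<longleftrightarrow> sim x p" by (simp add: hclass_def)

lemma hcl_self: "vp p \<Longrightarrow> p \<in> hcl p" by (simp add: mem_hcl sim_refl)

lemma hcl_eqI: "sim p q \<Longrightarrow> hcl p = hcl q"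
  unfolding hclass_def by (auto intro: sim_trans sim_sym)

lemma hcl_eq: "vp p \<Longrightarrow> hcl p = hcl q \<longleftrightarrow> sim p q"
  using hcl_eqI hcl_self mem_hcl by blast

lemma some_hcl: assumes "vp p"
  shows "ptail (SOME x. x \<in> hcl p) = ptail p \<and> hd' (SOME x. x \<in> hcl p) = hd' p"
proof -
  have "(SOME x. x \<in> hcl p) \<in> hcl p" using hcl_self[OF assms] by (rule someI)
  then show ?thesis using sim_ends mem_hcl by blast
qed

lemma FO_hcl: "vp p \<Longrightarrow> FO (hcl p) = hd' p"
  using some_hcl by (simp add: Phi_ob_def)

lemma D_dom: "vp p \<Longrightarrow> cDom DD (hcl p) = ptail p"
  using some_hcl by (simp add: path_category_def)

lemma D_cod: "vp p \<Longrightarrow> cCod DD (hcl p) = hd' p"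
  using some_hcl by (simp add: path_category_def)

lemma D_comp: assumes "vp r" "vp s" "hd' r = ptail s"
  shows "cComp DD (hcl s) (hcl r) = hcl (pconc r s)"
proof -
  have "x \<in> hcl (pconc r s)" if "n \<in> hcl r" "m \<in> hcl s" "hd' n = ptail m" "sim x (pconc n m)" for x n m
  proof -
    have nr: "sim n r" and ms: "sim m s" using that mem_hcl by auto
    have "sim (pconc n m) (pconc r m)" using sim_rmul[OF nr] sim_valid[OF ms] that(3) by blast
    moreover have "sim (pconc r m) (pconc r s)"
      using sim_lmul[OF ms assms(1)] that(3) sim_ends[OF nr] by simp
    ultimately show ?thesis using that(4) mem_hcl sim_trans by blast
  qed
  moreover have "x \<in> hcl (pconc r s) \<Longrightarrow> \<exists>n \<in> hcl r. \<exists>m \<in> hcl s. hd' n = ptail m \<and> sim x (pconc n m)" for x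
    using assms hcl_self mem_hcl by blast
  ultimately show ?thesis unfolding path_category_def by auto
qed

lemma Phi_hcl: assumes "vp p" "vp q" "vp r" "hd' p = ptail r" "sim q (pconc p r)"
  shows "FM (hcl p, hcl q) = hcl r"
proof -
  have "x \<in> hcl r" if "vp x" "p' \<in> hcl p" "q' \<in> hcl q" "hd' p' = ptail x" "sim q' (pconc p' x)" for x p' q'
  proof -
    have pp: "sim p' p" and qq: "sim q' q" using that mem_hcl by auto
    have "sim (pconc p' x) (pconc p x)" using sim_rmul[OF pp that(1) that(4)] .
    then have "sim (pconc p x) (pconc p r)"
      using that(5) qq assms(5) by (meson sim_sym sim_trans)
    then have "sim x r" using lcancel[OF assms(1) that(1) assms(3)] assms(4) that(4) sim_ends[OF pp] by simp
    then show ?thesis by (simp add: mem_hcl)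
  qed
  moreover have "vp x \<and> (\<exists>p' \<in> hcl p. \<exists>q' \<in> hcl q. hd' p' = ptail x \<and> sim q' (pconc p' x))"
    if "x \<in> hcl r" for x
  proof -
    have xr: "sim x r" using that mem_hcl by simp
    have "sim (pconc p x) (pconc p r)"
      using sim_lmul[OF xr assms(1)] assms(4) sim_ends[OF xr] by simp
    then have "sim q (pconc p x)" using assms(5) by (meson sim_sym sim_trans)
    then show ?thesis using xr sim_valid hcl_self assms sim_ends[OF xr] by metis
  qed
  ultimately show ?thesis unfolding Phi_mor_def by auto
qed

lemma C_mor_fst: "f \<in> cMor CC \<Longrightarrow> \<exists>p. vp p \<and> fst f = hcl p"
  by (cases f) (simp add: path_poset_def, blast)

lemma C_mor_snd: "f \<in> cMor CC \<Longrightarrow> \<exists>p. vp p \<and> snd f = hcl p"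
  by (cases f) (simp add: path_poset_def, blast)

lemma C_ob: "x \<in> cOb CC \<longleftrightarrow> (\<exists>p. vp p \<and> x = hcl p)"
  by (auto simp: path_poset_def)

lemma morph_rep: assumes "f \<in> cMor CC" "fst f = hcl p0" "vp p0"
  shows "\<exists>r. vp r \<and> hd' p0 = ptail r \<and> snd f = hcl (pconc p0 r) \<and> FM f = hcl r"
proof -
  obtain P R where f: "f = (P, R)" by force
  obtain q0 where q0: "vp q0" "R = hcl q0" using C_mor_snd[OF assms(1)] f by auto
  have "path_leq K Q S P R" using assms(1) f by (simp add: path_poset_def)
  then obtain p q r where pqr: "p \<in> P" "q \<in> R" "vp r" "hd' p = ptail r" "sim q (pconc p r)"
    unfolding path_leq_def by blast
  have pp: "sim p p0" using pqr(1) f assms(2) mem_hcl by simp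
  have "sim (pconc p r) (pconc p0 r)" using sim_rmul[OF pp pqr(3) pqr(4)] .
  then have q: "sim q (pconc p0 r)" using pqr(5) sim_trans by blast
  have qq: "sim q q0" using pqr(2) q0 mem_hcl by simp
  have R: "R = hcl (pconc p0 r)" using q qq q0 hcl_eqI by (metis sim_sym sim_trans)
  have h: "hd' p0 = ptail r" using pqr(4) sim_ends[OF pp] by simp
  have "FM f = hcl r" using Phi_hcl[OF assms(3) sim_valid[OF q, THEN conjunct2] pqr(3) h] f assms(2) R
      sim_refl sim_valid[OF q] by simp
  then show ?thesis using R f h pqr(3) by (intro exI[of _ r]) simp
qed

lemma C_morI: "vp p \<Longrightarrow> vp r \<Longrightarrow> hd' p = ptail r \<Longrightarrow> (hcl p, hcl (pconc p r)) \<in> cMor CC"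
proof -
  assume a: "vp p" "vp r" "hd' p = ptail r"
  have v: "vp (pconc p r)" using a valid_pconc by blast
  have "path_leq K Q S (hcl p) (hcl (pconc p r))"
    unfolding path_leq_def using a v hcl_self sim_refl by blast
  moreover have "hcl p \<in> {hcl p |p. vp p}" using a(1) by blast
  moreover have "hcl (pconc p r) \<in> {hcl p |p. vp p}" using v by blast
  ultimately show ?thesis by (simp add: path_poset_def)
qed

lemma FM_C_morI: "vp p \<Longrightarrow> vp r \<Longrightarrow> hd' p = ptail r \<Longrightarrow> FM (hcl p, hcl (pconc p r)) = hcl r"
  using Phi_hcl valid_pconc sim_refl by blast

lemma FM_in: "f \<in> cMor CC \<Longrightarrow> \<exists>r. vp r \<and> FM f = hcl r"
  using C_mor_fst morph_rep by metis

lemma C_id_mor: assumes "vp p" shows "(hcl p, hcl p) \<in> cMor CC"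
proof -
  have v: "vp (hd' p, [])" using phead_in_verts[OF finQ assms] by (simp add: valid_path_def)
  show ?thesis using C_morI[OF assms v] by (simp add: ptail_def)
qed

lemma phi_functor: "is_functor CC DD FO FM"
  unfolding is_functor_def
proof (intro conjI ballI impI)
  fix x assume "x \<in> cOb CC"
  then obtain p where p: "vp p" "x = hcl p" using C_ob by blast
  show "FO x \<in> cOb DD" using p FO_hcl phead_in_verts[OF finQ] by (simp add: path_category_def)
next
  fix f assume f: "f \<in> cMor CC"
  obtain p0 where p0: "vp p0" "fst f = hcl p0" using C_mor_fst[OF f] by blast
  obtain r where r: "vp r" "hd' p0 = ptail r" "snd f = hcl (pconc p0 r)" "FM f = hcl r"
    using morph_rep[OF f p0(2) p0(1)] by blast
  have v: "vp (pconc p0 r)" using valid_pconc r p0 by blast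
  show "FM f \<in> cMor DD"
  proof -
    have "hcl r \<in> {hcl p|p. vp p}" using r(1) by blast
    then show ?thesis using r(4) by (simp add: path_category_def)
  qed
  show "cDom DD (FM f) = FO (cDom CC f)" using r p0 D_dom FO_hcl by (simp add: path_poset_def)
  show "cCod DD (FM f) = FO (cCod CC f)" using r p0 D_cod FO_hcl v by (simp add: path_poset_def phead_pconc)
next
  fix x assume "x \<in> cOb CC"
  then obtain p where p: "vp p" "x = hcl p" using C_ob by blast
  have h: "hd' p \<in> verts Q" using phead_in_verts[OF finQ p(1)] .
  have v: "vp (hd' p, [])" using h by (simp add: valid_path_def)
  have "FM (hcl p, hcl p) = hcl (hd' p, [])" using FM_C_morI[OF p(1) v] by (simp add: ptail_def)
  then show "FM (cId CC x) = cId DD (FO x)" using p FO_hcl by (simp add: path_poset_def path_category_def)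
next
  fix f g assume f: "f \<in> cMor CC" and g: "g \<in> cMor CC" and fg: "cDom CC g = cCod CC f"
  obtain p where p: "vp p" "fst f = hcl p" using C_mor_fst[OF f] by blast
  obtain r where r: "vp r" "hd' p = ptail r" "snd f = hcl (pconc p r)" "FM f = hcl r"
    using morph_rep[OF f p(2) p(1)] by blast
  have vpr: "vp (pconc p r)" using valid_pconc r p by blast
  have g1: "fst g = hcl (pconc p r)" using fg r by (simp add: path_poset_def)
  obtain s where s: "vp s" "hd' (pconc p r) = ptail s" "snd g = hcl (pconc (pconc p r) s)" "FM g = hcl s"
    using morph_rep[OF g g1 vpr] by blast
  have hrs: "hd' r = ptail s" using s(2) r(2) by (simp add: phead_pconc)
  have vrs: "vp (pconc r s)" using valid_pconc r s hrs by blast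
  have "cComp CC g f = (hcl p, hcl (pconc p (pconc r s)))"
    using p s by (simp add: path_poset_def pconc_assoc)
  then have "FM (cComp CC g f) = hcl (pconc r s)"
    using FM_C_morI[OF p(1) vrs] r by simp
  then show "FM (cComp CC g f) = cComp DD (FM g) (FM f)"
    using D_comp[OF r(1) s(1) hrs] r s by simp
qed

end

lemma functor_iso:
  assumes F: "is_functor C D FO FM" and ob: "\<forall>f \<in> cMor C. cDom C f \<in> cOb C \<and> cCod C f \<in> cOb C"
    and f: "f \<in> cMor C" "is_iso C f"
  shows "is_iso D (FM f)"
proof -
  obtain g where g: "g \<in> cMor C" "cDom C g = cCod C f" "cCod C g = cDom C f"
       "cComp C g f = cId C (cDom C f)" "cComp C f g = cId C (cCod C f)"
    using f(2) unfolding is_iso_def by blast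
  have Ff: "FM f \<in> cMor D" "cDom D (FM f) = FO (cDom C f)" "cCod D (FM f) = FO (cCod C f)"
    using F f(1) unfolding is_functor_def by auto
  have Fg: "FM g \<in> cMor D" "cDom D (FM g) = FO (cDom C g)" "cCod D (FM g) = FO (cCod C g)"
    using F g(1) unfolding is_functor_def by auto
  have comp: "\<forall>f\<in>cMor C. \<forall>g\<in>cMor C. cDom C g = cCod C f \<longrightarrow> FM (cComp C g f) = cComp D (FM g) (FM f)"
    using F by (simp add: is_functor_def)
  have c1: "FM (cComp C g f) = cComp D (FM g) (FM f)"
    using comp f(1) g(1) g(2) by blast
  have c2: "FM (cComp C f g) = cComp D (FM f) (FM g)"
    using comp f(1) g(1) g(3) by metis
  have i1: "FM (cId C (cDom C f)) = cId D (FO (cDom C f))"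
    using F ob f(1) unfolding is_functor_def by auto
  have i2: "FM (cId C (cCod C f)) = cId D (FO (cCod C f))"
    using F ob f(1) unfolding is_functor_def by auto
  have e1: "cComp D (FM g) (FM f) = cId D (cDom D (FM f))" using c1 g(4) i1 Ff(2) by simp
  have e2: "cComp D (FM f) (FM g) = cId D (cCod D (FM f))" using c2 g(5) i2 Ff(3) by simp
  have dg: "cDom D (FM g) = cCod D (FM f)" using Fg(2) g(2) Ff(3) by simp
  have cg: "cCod D (FM g) = cDom D (FM f)" using Fg(3) g(3) Ff(2) by simp
  show ?thesis unfolding is_iso_def using Ff(1) Fg(1) e1 e2 dg cg by blast
qed

fun chain :: "('o,'m) cat \<Rightarrow> 'm list \<Rightarrow> bool" where
  "chain C (f # g # fs) = (cDom C f = cCod C g \<and> chain C (g # fs))"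
| "chain C _ = True"

lemma chain_iff: "(\<forall>i. Suc i < length fs \<longrightarrow> cDom C (fs ! i) = cCod C (fs ! Suc i)) \<longleftrightarrow> chain C fs"
proof (induction C fs rule: chain.induct)
  case (1 C f g fs)
  have "(\<forall>i. Suc i < length (f # g # fs) \<longrightarrow> cDom C ((f # g # fs) ! i) = cCod C ((f # g # fs) ! Suc i))
     \<longleftrightarrow> cDom C f = cCod C g \<and> (\<forall>i. Suc i < length (g # fs) \<longrightarrow> cDom C ((g # fs) ! i) = cCod C ((g # fs) ! Suc i))"
    (is "?L \<longleftrightarrow> ?R")
  proof
    assume L: ?L
    show ?R
    proof (intro conjI allI impI)
      show "cDom C f = cCod C g" using L[rule_format, of 0] by simp
      fix i assume "Suc i < length (g # fs)"
      then show "cDom C ((g # fs) ! i) = cCod C ((g # fs) ! Suc i)" using L[rule_format, of "Suc i"] by simp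
    qed
  next
    assume R: ?R
    show ?L
    proof (intro allI impI)
      fix i assume i: "Suc i < length (f # g # fs)"
      show "cDom C ((f # g # fs) ! i) = cCod C ((f # g # fs) ! Suc i)"
      proof (cases i)
        case 0 then show ?thesis using R by simp
      next
        case (Suc j) then show ?thesis using R i by simp
      qed
    qed
  qed
  then show ?case using 1 by simp
qed auto

lemma comp_list_poset: "fs \<noteq> [] \<Longrightarrow> comp_list (path_poset K Q S) fs = (fst (last fs), snd (hd fs))"
proof (induction fs)
  case Nil then show ?case by simp
next
  case (Cons f fs)
  then show ?case by (cases fs) (auto simp: path_poset_def)
qed

context hpa begin

lemma D_comp_list: "gs \<noteq> [] \<Longrightarrow> chain DD gs \<Longrightarrow> set gs \<subseteq> cMor DD \<Longrightarrow>
   \<exists>c. vp c \<and> comp_list DD gs = hcl c \<and> cDom DD (last gs) = ptail c \<and> cCod DD (hd gs) = hd' c"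
proof (induction gs)
  case Nil then show ?case by simp
next
  case (Cons g gs)
  obtain r where r: "vp r" "g = hcl r" using Cons.prems by (auto simp: path_category_def)
  show ?case
  proof (cases "gs = []")
    case True
    then show ?thesis using r D_dom[OF r(1)] D_cod[OF r(1)] by (intro exI[of _ r]) simp
  next
    case False
    then obtain g' gs' where gs: "gs = g' # gs'" by (cases gs) auto
    obtain c where c: "vp c" "comp_list DD gs = hcl c" "cDom DD (last gs) = ptail c" "cCod DD (hd gs) = hd' c"
      using Cons False gs by auto
    have hcr: "hd' c = ptail r" using Cons.prems(2) gs c(4) r D_dom by simp
    have "comp_list DD (g # gs) = hcl (pconc c r)"
      using gs c(2) r D_comp[OF c(1) r(1) hcr] by simp
    moreover have "cDom DD (last (g # gs)) = ptail (pconc c r)" using c(3) gs by simp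
    moreover have "cCod DD (hd (g # gs)) = hd' (pconc c r)" using r D_cod hcr by (simp add: phead_pconc)
    ultimately show ?thesis using valid_pconc[OF c(1) r(1) hcr] by blast
  qed
qed

lemma lift: "gs \<noteq> [] \<Longrightarrow> chain DD gs \<Longrightarrow> set gs \<subseteq> cMor DD \<Longrightarrow> vp p0 \<Longrightarrow> cDom DD (last gs) = hd' p0 \<Longrightarrow>
  \<exists>fs c. length fs = length gs \<and> set fs \<subseteq> cMor CC \<and> chain CC fs \<and> map FM fs = gs
     \<and> fst (last fs) = hcl p0 \<and> vp c \<and> comp_list DD gs = hcl c \<and> hd' p0 = ptail c
     \<and> snd (hd fs) = hcl (pconc p0 c) \<and> cCod DD (hd gs) = hd' c"
proof (induction gs)
  case Nil then show ?case by simp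
next
  case (Cons g gs)
  obtain r where r: "vp r" "g = hcl r" using Cons.prems by (auto simp: path_category_def)
  show ?case
  proof (cases "gs = []")
    case True
    have h: "hd' p0 = ptail r" using Cons.prems(5) True r D_dom by simp
    let ?fs = "[(hcl p0, hcl (pconc p0 r))]"
    have "length ?fs = length (g # gs) \<and> set ?fs \<subseteq> cMor CC \<and> chain CC ?fs \<and> map FM ?fs = g # gs
     \<and> fst (last ?fs) = hcl p0 \<and> vp r \<and> comp_list DD (g # gs) = hcl r \<and> hd' p0 = ptail r
     \<and> snd (hd ?fs) = hcl (pconc p0 r) \<and> cCod DD (hd (g # gs)) = hd' r"
      using True r h C_morI[OF Cons.prems(4) r(1) h] FM_C_morI[OF Cons.prems(4) r(1) h] D_cod by simp
    then show ?thesis by (rule exI[of _ ?fs, OF exI[of _ r]])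
  next
    case False
    then obtain g' gs' where gs: "gs = g' # gs'" by (cases gs) auto
    obtain fs c where IH: "length fs = length gs" "set fs \<subseteq> cMor CC" "chain CC fs" "map FM fs = gs"
     "fst (last fs) = hcl p0" "vp c" "comp_list DD gs = hcl c" "hd' p0 = ptail c"
     "snd (hd fs) = hcl (pconc p0 c)" "cCod DD (hd gs) = hd' c"
    proof -
      have ch: "chain DD gs" using Cons.prems(2) gs by simp
      have st: "set gs \<subseteq> cMor DD" using Cons.prems(3) by simp
      have ld: "cDom DD (last gs) = hd' p0" using Cons.prems(5) False by simp
      show ?thesis using Cons.IH[OF False ch st Cons.prems(4) ld] that by blast
    qed
    have hcr: "hd' c = ptail r" using Cons.prems(2) gs IH(10) r D_dom by simp
    have vpc: "vp (pconc p0 c)" using valid_pconc[OF Cons.prems(4) IH(6) IH(8)] .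
    have h2: "hd' (pconc p0 c) = ptail r" using hcr IH(8) by (simp add: phead_pconc)
    let ?f = "(hcl (pconc p0 c), hcl (pconc (pconc p0 c) r))"
    have fm: "?f \<in> cMor CC" using C_morI[OF vpc r(1) h2] .
    have Ff: "FM ?f = g" using FM_C_morI[OF vpc r(1) h2] r by simp
    obtain f' fs' where fs: "fs = f' # fs'" using IH(1) gs by (cases fs) auto
    have ch: "chain CC (?f # fs)" using IH(3) IH(9) fs by (simp add: path_poset_def)
    have "comp_list DD (g # gs) = hcl (pconc c r)"
      using gs IH(7) r D_comp[OF IH(6) r(1) hcr] by simp
    moreover have "snd (hd (?f # fs)) = hcl (pconc p0 (pconc c r))" by (simp add: pconc_assoc)
    moreover have "cCod DD (hd (g # gs)) = hd' (pconc c r)" using r D_cod hcr by (simp add: phead_pconc)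
    moreover have "fst (last (?f # fs)) = hcl p0" using IH(5) fs by simp
    moreover have "hd' p0 = ptail (pconc c r)" using IH(8) by simp
    ultimately show ?thesis using valid_pconc[OF IH(6) r(1) hcr] IH fm Ff ch
      by (intro exI[of _ "?f # fs"] exI[of _ "pconc c r"]) simp
  qed
qed

lemma C_inj: assumes "f \<in> cMor CC" "f' \<in> cMor CC" "fst f = fst f'" "FM f = FM f'" shows "f = f'"
proof -
  obtain p where p: "vp p" "fst f = hcl p" using C_mor_fst[OF assms(1)] by blast
  obtain r where r: "vp r" "hd' p = ptail r" "snd f = hcl (pconc p r)" "FM f = hcl r"
    using morph_rep[OF assms(1) p(2) p(1)] by blast
  obtain r' where r': "vp r'" "hd' p = ptail r'" "snd f' = hcl (pconc p r')" "FM f' = hcl r'"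
    using morph_rep[OF assms(2) _ p(1)] p assms(3) by metis
  have "hcl r = hcl r'" using r(4) r'(4) assms(4) by simp
  then have "sim r r'" using hcl_eq[OF r(1)] by simp
  then have "sim (pconc p r) (pconc p r')" using sim_lmul p r by simp
  then have "snd f = snd f'" using r r' hcl_eqI by simp
  then show ?thesis using assms(3) by (simp add: prod_eq_iff)
qed

lemma chain_unique: "chain CC fs \<Longrightarrow> chain CC fs' \<Longrightarrow> set fs \<subseteq> cMor CC \<Longrightarrow> set fs' \<subseteq> cMor CC
  \<Longrightarrow> map FM fs = map FM fs' \<Longrightarrow> fs \<noteq> [] \<Longrightarrow> fst (last fs) = fst (last fs') \<Longrightarrow> fs = fs'"
proof (induction fs arbitrary: fs')
  case Nil then show ?case by simp
next
  case (Cons f fs)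
  obtain f' fs'' where fs': "fs' = f' # fs''" using Cons.prems(5) by (cases fs') auto
  show ?case
  proof (cases "fs = []")
    case True
    then have "fs'' = []" using Cons.prems(5) fs' by simp
    then show ?thesis using True Cons.prems fs' C_inj by simp
  next
    case False
    then obtain g gs where g: "fs = g # gs" by (cases fs) auto
    obtain g' gs' where g': "fs'' = g' # gs'" using Cons.prems(5) fs' g by (cases fs'') auto
    have eq: "fs = fs''" using Cons.IH[of fs''] Cons.prems fs' g g' by simp
    have "fst f = fst f'" using Cons.prems(1,2) fs' g g' eq by (simp add: path_poset_def)
    then have "f = f'" using C_inj Cons.prems fs' by simp
    then show ?thesis using eq fs' by simp
  qed
qed

lemma fequiv_refl: assumes "length fs \<ge> 2" "set fs \<subseteq> cMor CC" "chain CC fs"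
  shows "factorization_equiv CC fs fs"
proof -
  let ?hs = "map (\<lambda>f. (fst f, fst f)) (butlast fs)"
  have ch: "\<And>i. Suc i < length fs \<Longrightarrow> fst (fs ! i) = snd (fs ! Suc i)"
    using assms(3) chain_iff[of fs CC] by (simp add: path_poset_def)
  have mor: "\<And>i. i < length fs \<Longrightarrow> fs ! i \<in> cMor CC" using assms(2) by auto
  have hsi: "\<And>i. i < length ?hs \<Longrightarrow> ?hs ! i = (fst (fs ! i), fst (fs ! i))"
    by (simp add: nth_butlast)
  have hm: "\<And>i. i < length ?hs \<Longrightarrow> ?hs ! i \<in> cMor CC"
  proof -
    fix i assume i: "i < length ?hs"
    have "i < length fs" using i by simp
    then obtain p where "vp p" "fst (fs ! i) = hcl p" using C_mor_fst[OF mor] by blast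
    then show "?hs ! i \<in> cMor CC" using hsi[OF i] C_id_mor by simp
  qed
  show ?thesis unfolding factorization_equiv_def
  proof (intro conjI exI[of _ ?hs] allI impI)
    show "length fs = length fs" by simp
    show "length ?hs = length fs - 1" by simp
    show "length ?hs = length ?hs" by simp
    show "fs ! 0 = cComp CC (fs ! 0) (?hs ! 0)" using hsi[of 0] assms(1) by (simp add: path_poset_def)
    show "fs ! (length fs - 1) = cComp CC (?hs ! (length fs - 2)) (fs ! (length fs - 1))"
      using hsi[of "length fs - 2"] assms(1) ch[of "length fs - 2"]
      by (simp add: path_poset_def Suc_diff_Suc numeral_2_eq_2)
  next
    fix i assume i: "0 < i \<and> i < length fs - 1"
    show "fs ! i = cComp CC (?hs ! (i - 1)) (cComp CC (fs ! i) (?hs ! i))"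
    proof -
      have i1: "i - 1 < length ?hs" "i < length ?hs" using i by auto
      have c: "fst (fs ! (i - 1)) = snd (fs ! i)" using ch[of "i - 1"] i by auto
      show ?thesis using hsi[OF i1(1)] hsi[OF i1(2)] c by (simp add: path_poset_def prod_eq_iff)
    qed
  next
    fix i assume i: "i < length ?hs"
    show "?hs ! i \<in> cMor CC" using hm[OF i] .
    show "?hs ! i \<in> cMor CC" using hm[OF i] .
    show "cDom CC (?hs ! i) = cCod CC (?hs ! i)" using hsi[OF i] by (simp add: path_poset_def)
    show "cCod CC (?hs ! i) = cDom CC (?hs ! i)" using hsi[OF i] by (simp add: path_poset_def)
    show "cComp CC (?hs ! i) (?hs ! i) = cId CC (cDom CC (?hs ! i))" using hsi[OF i] by (simp add: path_poset_def)
    show "cComp CC (?hs ! i) (?hs ! i) = cId CC (cCod CC (?hs ! i))" using hsi[OF i] by (simp add: path_poset_def)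
    show "cCod CC (?hs ! i) = cDom CC (fs ! i)" using hsi[OF i] by (simp add: path_poset_def)
  qed
qed

lemma C_ob_mor: "\<forall>f \<in> cMor CC. cDom CC f \<in> cOb CC \<and> cCod CC f \<in> cOb CC"
  by (auto simp: path_poset_def)

lemma main: "almost_discrete_fibration CC DD FO FM"
  unfolding almost_discrete_fibration_def
proof (intro conjI phi_functor ballI allI impI)
  fix q p gs
  assume p: "p \<in> cMor CC" and pq: "FM p = q" and gs: "nontrivial_factorization DD q gs"
  have gl: "length gs \<ge> 2" and gset: "set gs \<subseteq> cMor DD" and gch: "chain DD gs"
    and gc: "comp_list DD gs = q" and gni: "\<forall>g \<in> set gs. \<not> is_iso DD g"
    using gs chain_iff[of gs DD] unfolding nontrivial_factorization_def factorization_def by auto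
  have gne: "gs \<noteq> []" using gl by auto
  obtain p0 where p0: "vp p0" "fst p = hcl p0" using C_mor_fst[OF p] by blast
  obtain r where r: "vp r" "hd' p0 = ptail r" "snd p = hcl (pconc p0 r)" "FM p = hcl r"
    using morph_rep[OF p p0(2) p0(1)] by blast
  obtain c where c: "vp c" "comp_list DD gs = hcl c" "cDom DD (last gs) = ptail c"
    using D_comp_list[OF gne gch gset] by blast
  have "hcl c = hcl r" using c(2) gc pq r(4) by simp
  then have "sim c r" using hcl_eq[OF c(1)] by blast
  then have ld: "cDom DD (last gs) = hd' p0" using c(3) r(2) sim_ends by simp
  have uniqC: "fs = fs'" if f1: "nontrivial_factorization CC p fs" "map FM fs = gs"
      and f2: "nontrivial_factorization CC p fs'" "map FM fs' = gs" for fs fs'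
  proof -
    have a: "length fs \<ge> 2" "set fs \<subseteq> cMor CC" "chain CC fs" "comp_list CC fs = p"
      using f1 chain_iff[of fs CC] unfolding nontrivial_factorization_def factorization_def by auto
    have b: "length fs' \<ge> 2" "set fs' \<subseteq> cMor CC" "chain CC fs'" "comp_list CC fs' = p"
      using f2 chain_iff[of fs' CC] unfolding nontrivial_factorization_def factorization_def by auto
    have ne: "fs \<noteq> []" "fs' \<noteq> []" using a(1) b(1) by auto
    have "fst (last fs) = fst (last fs')"
      using a(4) b(4) comp_list_poset[OF ne(1), of K Q S] comp_list_poset[OF ne(2), of K Q S] by (metis fst_conv)
    then show ?thesis using chain_unique[OF a(3) b(3) a(2) b(2)] f1(2) f2(2) ne by simp
  qed
  show "\<exists>fs. nontrivial_factorization CC p fs \<and> map FM fs = gs"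
  proof -
    obtain fs c' where L: "length fs = length gs" "set fs \<subseteq> cMor CC" "chain CC fs" "map FM fs = gs"
     "fst (last fs) = hcl p0" "vp c'" "comp_list DD gs = hcl c'" "hd' p0 = ptail c'"
     "snd (hd fs) = hcl (pconc p0 c')"
      using lift[OF gne gch gset p0(1) ld] by blast
    have "hcl c' = hcl r" using L(7) gc pq r(4) by simp
    then have "sim c' r" using hcl_eq[OF L(6)] by blast
    then have "sim (pconc p0 c') (pconc p0 r)" using sim_lmul p0(1) L(8) by simp
    then have "snd (hd fs) = snd p" using L(9) r(3) hcl_eqI by simp
    moreover have fne: "fs \<noteq> []" using L(1) gne by auto
    ultimately have comp: "comp_list CC fs = p" using comp_list_poset[OF fne] L(5) p0(2) by (simp add: prod_eq_iff)
    have ni: "\<forall>f \<in> set fs. \<not> is_iso CC f"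
    proof
      fix f assume f: "f \<in> set fs"
      then have "FM f \<in> set gs" using L(4) by auto
      then have "\<not> is_iso DD (FM f)" using gni by blast
      then show "\<not> is_iso CC f" using functor_iso[OF phi_functor C_ob_mor] f L(2) by blast
    qed
    have "nontrivial_factorization CC p fs"
      unfolding nontrivial_factorization_def factorization_def
      using L(1,2,3) gl comp ni chain_iff[of fs CC] by simp
    then show ?thesis using L(4) by blast
  qed
next
  fix q p gs fs fs'
  assume p: "p \<in> cMor CC" and pq: "FM p = q" and gs: "nontrivial_factorization DD q gs"
    and h: "nontrivial_factorization CC p fs \<and> map FM fs = gs \<and> nontrivial_factorization CC p fs' \<and> map FM fs' = gs"
  have a: "length fs \<ge> 2" "set fs \<subseteq> cMor CC" "chain CC fs" "comp_list CC fs = p"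
    using h chain_iff[of fs CC] unfolding nontrivial_factorization_def factorization_def by auto
  have b: "length fs' \<ge> 2" "set fs' \<subseteq> cMor CC" "chain CC fs'" "comp_list CC fs' = p"
    using h chain_iff[of fs' CC] unfolding nontrivial_factorization_def factorization_def by auto
  have ne: "fs \<noteq> []" "fs' \<noteq> []" using a(1) b(1) by auto
  have "fst (last fs) = fst (last fs')"
    using a(4) b(4) comp_list_poset[OF ne(1), of K Q S] comp_list_poset[OF ne(2), of K Q S] by (metis fst_conv)
  then have "fs = fs'" using chain_unique[OF a(3) b(3) a(2) b(2)] h ne by simp
  then show "factorization_equiv CC fs fs'" using fequiv_refl[OF a(1,2,3)] by simp
qed

end

theorem proposition4p1:
  fixes K :: "'k::field itself"
    and Q :: "('v,'e) quiver"
    and S :: "(('v,'e) path \<times> ('v,'e) path) set"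
  assumes "homotopy_path_algebra K Q S"
  shows "almost_discrete_fibration (path_poset K Q S) (path_category K Q S)
           (Phi_ob Q) (Phi_mor K Q S)"
proof -
  interpret hpa K Q S using assms by (rule hpa.intro)
  show ?thesis by (rule main)
qed

end
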